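(* Let $X$ be a tree of bounded valence, $p$ a transition kernel on $X_0$ with $(X_0,p)$ irreducible and $k\ge0$ with $d(x,y)>k\Rightarrow p(x,y)=0$. Let $\gamma$ be a $p$-admissible path with source $a$ and aim $b$, and let $x\neq y$ be vertices with $a\in\mathcal{B}(x)\setminus\mathcal{B}(y)$ and $b\in\mathcal{B}(y)$; write $[x,y]=(x_0,\dots,x_m)$. Then there exist an integer $0<l\le m$, a tuple $(c_0,\dots,c_l)\in\Xi_{[x,y]}$ with crossing indices $(i_1,\dots,i_l)$, and $p$-admissible paths $\gamma_1,\dots,\gamma_l,\gamma_f$ with $\gamma_s\in\mathcal{P}h(c_{s-1},c_s;\mathcal{B}(x_{i_s})^\complement)$ for $1\le s\le l$ and $\gamma_f\in\mathcal{P}h(c_l,b)$, such that $$\gamma=\gamma_1\ast\cdots\ast\gamma_l\ast\gamma_f.$$ The tuple $(c_0,\dots,c_l)$ and this decomposition are unique with these properties.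
   Context: A $p$-admissible path is $(\omega_0,\dots,\omega_n)$, $n\ge0$, with $p(\omega_{i-1},\omega_i)>0$ for all $i$; source $\omega_0$, aim $\omega_n$. $\mathcal{P}h(a,b)$ is the set of those from $a$ to $b$, and $\mathcal{P}h(a,b;\Omega)$ those whose intermediate vertices $\omega_1,\dots,\omega_{n-1}$ lie in $\Omega$. Concatenation $(\omega_0,\dots,\omega_n)\ast(\omega_n,\omega'_1,\dots,\omega'_{m})=(\omega_0,\dots,\omega_n,\omega'_1,\dots,\omega'_m)$. $\mathcal{B}(w)=\{v:d(w,v)\le k\}$, $\partial\mathcal{B}(w)=\{v:d(w,v)=k+1\}$, $\Xi_w=\{(a,b)\in\partial\mathcal{B}(w)\times\mathcal{B}(w):\mathcal{P}h(a,b;\mathcal{B}(w)^\complement)\ne\emptyset\}$. $\Xi_{[x,y]}$ is the set of tuples $(c_0,\dots,c_l)$, $0<l\le m$, for which there are integers $0<i_1<\dots<i_l\le m$ (the crossing indices, uniquely given by $i_s=1+\max\{i:c_{s-1}\in\mathcal{B}(x_i)\}$) with $c_0\in\mathcal{B}(x)\cap\partial\mathcal{B}(x_{i_1})$, $c_j\in\mathcal{B}(x_{i_j})\cap\partial\mathcal{B}(x_{i_{j+1}})$, $c_l\in\mathcal{B}(x_{i_l})\cap\mathcal{B}(y)$, and $(c_{j-1},c_j)\in\Xi_{x_{i_j}}$. *)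

theory Defs
  imports "HOL-Analysis.Analysis"
begin

definition walk :: "('a \<Rightarrow> 'a \<Rightarrow> bool) \<Rightarrow> 'a list \<Rightarrow> bool" where
  "walk adj w \<longleftrightarrow> w \<noteq> [] \<and> (\<forall>i. i + 1 < length w \<longrightarrow> adj (w ! i) (w ! (i + 1)))"

definition is_tree :: "('a \<Rightarrow> 'a \<Rightarrow> bool) \<Rightarrow> bool" where
  "is_tree adj \<longleftrightarrow>
     (\<forall>u v. adj u v \<longrightarrow> adj v u) \<and> (\<forall>u. \<not> adj u u) \<and>
     (\<forall>u v. \<exists>w. walk adj w \<and> hd w = u \<and> last w = v) \<and>
     \<not> (\<exists>w. walk adj w \<and> length w \<ge> 3 \<and> distinct w \<and> adj (last w) (hd w))"

definition bounded_valence :: "('a \<Rightarrow> 'a \<Rightarrow> bool) \<Rightarrow> bool" where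
  "bounded_valence adj \<longleftrightarrow> (\<exists>N::nat. \<forall>v. finite {u. adj v u} \<and> card {u. adj v u} \<le> N)"

definition gdist :: "('a \<Rightarrow> 'a \<Rightarrow> bool) \<Rightarrow> 'a \<Rightarrow> 'a \<Rightarrow> nat" where
  "gdist adj u v = (LEAST n. \<exists>w. walk adj w \<and> hd w = u \<and> last w = v \<and> length w = n + 1)"

definition is_geodesic :: "('a \<Rightarrow> 'a \<Rightarrow> bool) \<Rightarrow> 'a list \<Rightarrow> 'a \<Rightarrow> 'a \<Rightarrow> bool" where
  "is_geodesic adj xs x y \<longleftrightarrow> walk adj xs \<and> hd xs = x \<and> last xs = y \<and> length xs = gdist adj x y + 1"

definition transition_kernel :: "('a \<Rightarrow> 'a \<Rightarrow> real) \<Rightarrow> bool" where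
  "transition_kernel p \<longleftrightarrow> (\<forall>x y. 0 \<le> p x y) \<and> (\<forall>x. (p x has_sum 1) UNIV)"

definition admissible :: "('a \<Rightarrow> 'a \<Rightarrow> real) \<Rightarrow> 'a list \<Rightarrow> bool" where
  "admissible p w \<longleftrightarrow> w \<noteq> [] \<and> (\<forall>i. i + 1 < length w \<longrightarrow> p (w ! i) (w ! (i + 1)) > 0)"

definition Ph :: "('a \<Rightarrow> 'a \<Rightarrow> real) \<Rightarrow> 'a \<Rightarrow> 'a \<Rightarrow> 'a list set" where
  "Ph p a b = {w. admissible p w \<and> hd w = a \<and> last w = b}"

definition Ph_in :: "('a \<Rightarrow> 'a \<Rightarrow> real) \<Rightarrow> 'a \<Rightarrow> 'a \<Rightarrow> 'a set \<Rightarrow> 'a list set" where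
  "Ph_in p a b \<Omega> = {w \<in> Ph p a b. \<forall>i. 0 < i \<and> i + 1 < length w \<longrightarrow> w ! i \<in> \<Omega>}"

definition irreducible_kernel :: "('a \<Rightarrow> 'a \<Rightarrow> real) \<Rightarrow> bool" where
  "irreducible_kernel p \<longleftrightarrow> (\<forall>x y. Ph p x y \<noteq> {})"

text \<open>Concatenation: (\<omega>_0..\<omega>_n) * (\<omega>_n,\<omega>'_1..\<omega>'_m) = (\<omega>_0..\<omega>_n,\<omega>'_1..\<omega>'_m);
  cat_paths [g1,...,gr] = g1 * ... * gr.\<close>
fun cat_paths :: "'a list list \<Rightarrow> 'a list" where
  "cat_paths [] = []"
| "cat_paths [g] = g"
| "cat_paths (g # gs) = g @ tl (cat_paths gs)"

definition Ball_k :: "('a \<Rightarrow> 'a \<Rightarrow> bool) \<Rightarrow> nat \<Rightarrow> 'a \<Rightarrow> 'a set" where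
  "Ball_k adj k w = {v. gdist adj w v \<le> k}"

definition bdry_k :: "('a \<Rightarrow> 'a \<Rightarrow> bool) \<Rightarrow> nat \<Rightarrow> 'a \<Rightarrow> 'a set" where
  "bdry_k adj k w = {v. gdist adj w v = k + 1}"

definition Xi :: "('a \<Rightarrow> 'a \<Rightarrow> bool) \<Rightarrow> nat \<Rightarrow> ('a \<Rightarrow> 'a \<Rightarrow> real) \<Rightarrow> 'a \<Rightarrow> ('a \<times> 'a) set" where
  "Xi adj k p w = {(a, b). a \<in> bdry_k adj k w \<and> b \<in> Ball_k adj k w \<and>
                           Ph_in p a b (- Ball_k adj k w) \<noteq> {}}"

text \<open>c = (c_0,...,c_l) (a list of length l+1) lies in \<Xi>_[x,y] with crossing indices
  i_1 < ... < i_l (the values ii 1, ..., ii l), where xs = [x,y] = (x_0,...,x_m).\<close>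
definition Xi_geod_with :: "('a \<Rightarrow> 'a \<Rightarrow> bool) \<Rightarrow> nat \<Rightarrow> ('a \<Rightarrow> 'a \<Rightarrow> real) \<Rightarrow> 'a list
    \<Rightarrow> 'a list \<Rightarrow> (nat \<Rightarrow> nat) \<Rightarrow> bool" where
  "Xi_geod_with adj k p xs c ii \<longleftrightarrow>
     (let l = length c - 1; m = length xs - 1; B = Ball_k adj k; dB = bdry_k adj k in
       c \<noteq> [] \<and> 0 < l \<and> l \<le> m \<and>
       0 < ii 1 \<and> (\<forall>s. 1 \<le> s \<and> s < l \<longrightarrow> ii s < ii (s + 1)) \<and> ii l \<le> m \<and>
       c ! 0 \<in> B (xs ! 0) \<inter> dB (xs ! ii 1) \<and>
       (\<forall>j. 1 \<le> j \<and> j < l \<longrightarrow> c ! j \<in> B (xs ! ii j) \<inter> dB (xs ! ii (j + 1))) \<and>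
       c ! l \<in> B (xs ! ii l) \<inter> B (xs ! m) \<and>
       (\<forall>j. 1 \<le> j \<and> j \<le> l \<longrightarrow> (c ! (j - 1), c ! j) \<in> Xi adj k p (xs ! ii j)))"

end

theory Submission
  imports Defs
begin



lemma walk_Cons_Cons: "walk adj (u # v # w) \<longleftrightarrow> adj u v \<and> walk adj (v # w)"
proof
  assume h: "walk adj (u # v # w)"
  have "adj u v" using h[unfolded walk_def] by (metis add_0 length_Cons nth_Cons_0 nth_Cons_Suc zero_less_Suc add_Suc_right one_add_one Suc_eq_plus1 less_Suc_eq_0_disj)
  moreover have "walk adj (v # w)" unfolding walk_def
  proof (intro conjI allI impI)
    fix i assume "i + 1 < length (v # w)"
    then have "Suc i + 1 < length (u # v # w)" by simp
    then have "adj ((u # v # w) ! Suc i) ((u # v # w) ! (Suc i + 1))" using h unfolding walk_def by blast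
    then show "adj ((v # w) ! i) ((v # w) ! (i + 1))" by simp
  qed simp
  ultimately show "adj u v \<and> walk adj (v # w)" by blast
next
  assume h: "adj u v \<and> walk adj (v # w)"
  show "walk adj (u # v # w)" unfolding walk_def
  proof (intro conjI allI impI)
    fix i assume i: "i + 1 < length (u # v # w)"
    show "adj ((u # v # w) ! i) ((u # v # w) ! (i + 1))"
    proof (cases i)
      case 0 then show ?thesis using h by simp
    next
      case (Suc j)
      then have "j + 1 < length (v # w)" using i by simp
      then have "adj ((v # w) ! j) ((v # w) ! (j + 1))" using h unfolding walk_def by blast
      then show ?thesis using Suc by simp
    qed
  qed simp
qed

lemma walk_single[simp]: "walk adj [u]"
  by (simp add: walk_def)

lemma walk_nonempty: "walk adj w \<Longrightarrow> w \<noteq> []"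
  by (simp add: walk_def)

lemma walk_append_adj:
  "walk adj xs \<Longrightarrow> walk adj ys \<Longrightarrow> adj (last xs) (hd ys) \<Longrightarrow> walk adj (xs @ ys)"
proof (induction xs)
  case Nil then show ?case by (simp add: walk_def)
next
  case (Cons a xs)
  show ?case
  proof (cases xs)
    case Nil
    then show ?thesis using Cons.prems
      by (cases ys) (auto simp: walk_Cons_Cons dest: walk_nonempty)
  next
    case (Cons b xs')
    then have "walk adj xs" "adj a b" using Cons.prems by (auto simp: walk_Cons_Cons)
    moreover have "adj (last xs) (hd ys)" using Cons.prems \<open>xs = b # xs'\<close> by simp
    ultimately have "walk adj (xs @ ys)" using Cons.IH Cons.prems by blast
    then show ?thesis using \<open>adj a b\<close> \<open>xs = b # xs'\<close> by (simp add: walk_Cons_Cons)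
  qed
qed

lemma walk_append_tl:
  assumes "walk adj xs" "walk adj ys" "last xs = hd ys"
  shows "walk adj (xs @ tl ys)"
proof (cases "tl ys")
  case Nil then show ?thesis using assms by simp
next
  case (Cons c zs)
  obtain b where ys: "ys = b # c # zs" using Cons assms(2) by (cases ys) (auto simp: walk_def)
  then have "adj b c" "walk adj (c # zs)" using assms(2) by (auto simp: walk_Cons_Cons)
  then show ?thesis using walk_append_adj[OF assms(1), of "c # zs"] assms(3) ys by simp
qed

lemma walk_rev:
  assumes sym: "\<And>u v. adj u v \<Longrightarrow> adj v u"
  shows "walk adj w \<Longrightarrow> walk adj (rev w)"
proof (induction w)
  case Nil then show ?case by (simp add: walk_def)
next
  case (Cons a w)
  show ?case
  proof (cases w)
    case Nil then show ?thesis by simp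
  next
    case (Cons b w')
    then have "walk adj w" "adj a b" using Cons.prems by (auto simp: walk_Cons_Cons)
    then have "walk adj (rev w)" using Cons.IH by blast
    moreover have "last (rev w) = b" using \<open>w = b # w'\<close> by simp
    ultimately show ?thesis using walk_append_adj[of adj "rev w" "[a]"] sym[OF \<open>adj a b\<close>] by simp
  qed
qed

lemma walk_take: "walk adj w \<Longrightarrow> 0 < n \<Longrightarrow> walk adj (take n w)"
  by (auto simp: walk_def)

lemma walk_drop: "walk adj w \<Longrightarrow> n < length w \<Longrightarrow> walk adj (drop n w)"
  by (auto simp: walk_def add.commute add.left_commute)

locale tr =
  fixes adj :: "'a \<Rightarrow> 'a \<Rightarrow> bool"
  assumes tree: "is_tree adj"
begin

abbreviation "d \<equiv> gdist adj"

lemma sym: "adj u v \<Longrightarrow> adj v u"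
  using tree by (simp add: is_tree_def)

lemma irr: "\<not> adj u u"
  using tree by (simp add: is_tree_def)

lemma conn: "\<exists>w. walk adj w \<and> hd w = u \<and> last w = v"
  using tree by (simp add: is_tree_def)

lemma nocyc: "walk adj w \<Longrightarrow> length w \<ge> 3 \<Longrightarrow> distinct w \<Longrightarrow> \<not> adj (last w) (hd w)"
  using tree unfolding is_tree_def by blast

lemma geo_ex: "\<exists>w. walk adj w \<and> hd w = u \<and> last w = v \<and> length w = d u v + 1"
proof -
  obtain w where w: "walk adj w" "hd w = u" "last w = v" using conn by blast
  then have "length w = (length w - 1) + 1" using walk_nonempty by fastforce
  then have "\<exists>n w. walk adj w \<and> hd w = u \<and> last w = v \<and> length w = n + 1" using w by blast
  then show ?thesis unfolding gdist_def by (rule LeastI_ex)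
qed

lemma d_le: "walk adj w \<Longrightarrow> hd w = u \<Longrightarrow> last w = v \<Longrightarrow> d u v + 1 \<le> length w"
proof -
  assume w: "walk adj w" "hd w = u" "last w = v"
  then have "length w = (length w - 1) + 1" using walk_nonempty by fastforce
  then have "d u v \<le> length w - 1" unfolding gdist_def using w by (intro Least_le) blast
  then show ?thesis using walk_nonempty[OF w(1)] by (cases w) auto
qed

lemma d_refl[simp]: "d u u = 0"
  using d_le[of "[u]" u u] by simp

lemma d_zero: "d u v = 0 \<Longrightarrow> u = v"
proof -
  assume "d u v = 0"
  obtain w where w: "walk adj w" "hd w = u" "last w = v" "length w = d u v + 1" using geo_ex by blast
  then have "length w = 1" using \<open>d u v = 0\<close> by simp
  then obtain z where "w = [z]" by (cases w) auto
  then show ?thesis using w by simp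
qed

lemma d_sym: "d u v = d v u"
proof -
  have *: "d u v \<le> d v u" for u v
  proof -
    obtain w where w: "walk adj w" "hd w = v" "last w = u" "length w = d v u + 1" using geo_ex by blast
    have "walk adj (rev w)" using walk_rev[where adj=adj, OF sym] w by blast
    moreover have "hd (rev w) = u" "last (rev w) = v" using w walk_nonempty[OF w(1)] by (auto simp: hd_rev last_rev)
    ultimately have "d u v + 1 \<le> length (rev w)" using d_le by blast
    then show ?thesis using w by simp
  qed
  show ?thesis using *[of u v] *[of v u] by simp
qed

lemma d_tri: "d u w \<le> d u v + d v w"
proof -
  obtain w1 where w1: "walk adj w1" "hd w1 = u" "last w1 = v" "length w1 = d u v + 1" using geo_ex by blast
  obtain w2 where w2: "walk adj w2" "hd w2 = v" "last w2 = w" "length w2 = d v w + 1" using geo_ex by blast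
  have "walk adj (w1 @ tl w2)" using walk_append_tl w1 w2 by metis
  moreover have "hd (w1 @ tl w2) = u" using w1 walk_nonempty[OF w1(1)] by simp
  moreover have "last (w1 @ tl w2) = w"
    using w1 w2 walk_nonempty[OF w2(1)] by (cases w2) auto
  ultimately have "d u w + 1 \<le> length (w1 @ tl w2)" using d_le by blast
  then show ?thesis using w1 w2 by simp
qed

lemma d_adj: "adj u v \<Longrightarrow> d u v = 1"
proof -
  assume a: "adj u v"
  have "walk adj [u, v]" using a by (simp add: walk_Cons_Cons)
  then have "d u v \<le> 1" using d_le[of "[u,v]" u v] by simp
  moreover have "d u v \<noteq> 0" using d_zero irr a by blast
  ultimately show ?thesis by simp
qed

lemma geo_label:
  assumes w: "walk adj w" "hd w = u" "length w = d u (last w) + 1" and t: "t < length w"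
  shows "d u (w ! t) = t"
proof -
  have ne: "w \<noteq> []" using walk_nonempty w by blast
  have "walk adj (take (t+1) w)" using walk_take[OF w(1)] by simp
  moreover have "hd (take (t+1) w) = u" using w ne by simp
  moreover have "last (take (t+1) w) = w ! t" using t by (simp add: take_Suc_conv_app_nth)
  ultimately have le: "d u (w ! t) + 1 \<le> t + 1" using d_le[of "take (t+1) w"] t by fastforce
  have "walk adj (drop t w)" using walk_drop w t by blast
  moreover have "hd (drop t w) = w ! t" using t by (simp add: hd_drop_conv_nth)
  moreover have "last (drop t w) = last w" using t by simp
  ultimately have "d (w ! t) (last w) + 1 \<le> length w - t" using d_le[of "drop t w"] by fastforce
  moreover have "d u (last w) \<le> d u (w ! t) + d (w ! t) (last w)" by (rule d_tri)
  ultimately show ?thesis using le w(3) t by linarith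
qed

end




context tr
begin

lemma nb_distinct:
  assumes w: "walk adj w" and nb: "\<And>i. i + 2 < length w \<Longrightarrow> w ! i \<noteq> w ! (i + 2)"
  shows "distinct w"
proof (rule ccontr)
  assume "\<not> distinct w"
  then obtain i j where ij: "i < j" "j < length w" "w ! i = w ! j"
    by (metis distinct_conv_nth linorder_neqE_nat)
  define P where "P g = (\<exists>i. g > 0 \<and> i + g < length w \<and> w ! i = w ! (i + g))" for g
  have "P (j - i)" using ij unfolding P_def by (intro exI[of _ i]) auto
  define g where "g = (LEAST g. P g)"
  have Pg: "P g" unfolding g_def by (rule LeastI) fact
  have gmin: "\<And>g'. P g' \<Longrightarrow> g \<le> g'" unfolding g_def by (rule Least_le)
  obtain i0 where i0: "g > 0" "i0 + g < length w" "w ! i0 = w ! (i0 + g)" using Pg P_def by blast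
  define s where "s = take g (drop i0 w)"
  have ls: "length s = g" using i0 by (simp add: s_def)
  have snth: "\<And>t. t < g \<Longrightarrow> s ! t = w ! (i0 + t)" using i0 by (simp add: s_def)
  have ds: "distinct s"
    unfolding distinct_conv_nth
  proof (intro allI impI)
    fix a b assume ab: "a < length s" "b < length s" "a \<noteq> b"
    show "s ! a \<noteq> s ! b"
    proof
      assume eq: "s ! a = s ! b"
      { fix a b assume "a < b" "b < g" "s ! a = s ! b"
        then have "P (b - a)" unfolding P_def using snth i0 by (intro exI[of _ "i0 + a"]) auto
        then have "g \<le> b - a" by (rule gmin)
        with \<open>b < g\<close> \<open>a < b\<close> have False by linarith }
      then show False using ab eq ls by (metis linorder_neqE_nat)
    qed
  qed
  have "g \<noteq> 1"
  proof
    assume "g = 1"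
    then have "adj (w ! i0) (w ! (i0 + 1))" using w i0 unfolding walk_def by auto
    then show False using i0 \<open>g = 1\<close> irr by simp
  qed
  moreover have "g \<noteq> 2" using nb i0 by fastforce
  ultimately have g3: "g \<ge> 3" using i0 by linarith
  have "walk adj s" unfolding s_def using w i0 by (intro walk_take walk_drop) auto
  moreover have "adj (last s) (hd s)"
  proof -
    have "s \<noteq> []" using ls g3 by auto
    then have "last s = w ! (i0 + (g - 1))" using snth ls g3 by (simp add: last_conv_nth)
    moreover have "hd s = w ! (i0 + g)" using snth[of 0] g3 i0 \<open>s \<noteq> []\<close> by (simp add: hd_conv_nth)
    moreover have "adj (w ! (i0 + (g-1))) (w ! (i0 + (g - 1) + 1))"
    proof -
      have "i0 + (g-1) + 1 < length w" using i0 g3 by simp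
      then show ?thesis using w unfolding walk_def by blast
    qed
    ultimately show ?thesis using g3 by simp
  qed
  ultimately show False using nocyc ds g3 ls by blast
qed

lemma geo_from: "\<exists>w. walk adj w \<and> hd w = c \<and> last w = v \<and> length w = d c v + 1 \<and> (\<forall>t < length w. d c (w!t) = t)"
proof -
  obtain w where w: "walk adj w" "hd w = c" "last w = v" "length w = d c v + 1" using geo_ex by blast
  then show ?thesis using geo_label[of w c] by metis
qed

lemma adj_levels:
  assumes a: "adj u v" shows "d c v = d c u + 1 \<or> d c u = d c v + 1"
proof -
  have "d c v \<le> d c u + 1" using d_tri[of c v u] d_adj[OF a] by simp
  moreover have "d c u \<le> d c v + 1" using d_tri[of c u v] d_adj[OF sym[OF a]] by simp
  moreover have "d c u \<noteq> d c v"
  proof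
    assume eq: "d c u = d c v"
    define n where "n = d c u"
    obtain w1 where w1: "walk adj w1" "hd w1 = c" "last w1 = u" "length w1 = n + 1" "\<forall>t < length w1. d c (w1!t) = t"
      using geo_from n_def by blast
    obtain w2 where w2: "walk adj w2" "hd w2 = c" "last w2 = v" "length w2 = n + 1" "\<forall>t < length w2. d c (w2!t) = t"
      using geo_from[of c v] n_def eq by auto
    define W where "W = w1 @ rev w2"
    have lW: "length W = 2*n+2" using w1 w2 W_def by simp
    have Wnth: "d c (W!t) = (if t \<le> n then t else 2*n+1-t)" if "t < length W" for t
    proof (cases "t \<le> n")
      case True
      then have "W ! t = w1 ! t" using w1 W_def by (simp add: nth_append)
      then show ?thesis using True w1 by simp
    next
      case False
      then have "W ! t = rev w2 ! (t - (n+1))" using w1 W_def by (simp add: nth_append)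
      also have "\<dots> = w2 ! (2*n+1-t)" using w2 that lW False by (simp add: rev_nth mult_2)
      finally show ?thesis using False w2 that lW by simp
    qed
    have ne2: "w2 \<noteq> []" using w2 by auto
    have "walk adj W" unfolding W_def
      using walk_append_adj[OF w1(1) walk_rev[where adj=adj, OF sym w2(1)]] w1 w2 a ne2
      by (simp add: hd_rev)
    moreover have "\<And>i. i + 2 < length W \<Longrightarrow> W ! i \<noteq> W ! (i + 2)"
    proof
      fix i assume i: "i + 2 < length W" and e: "W ! i = W ! (i + 2)"
      have A: "d c (W!i) = (if i \<le> n then i else 2*n+1-i)" using Wnth i by simp
      have B: "d c (W!(i+2)) = (if i+2 \<le> n then i+2 else 2*n+1-(i+2))" using Wnth i by simp
      have E: "d c (W!i) = d c (W!(i+2))" using e by simp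
      have ar: "\<And>i n::nat. (if i \<le> n then i else 2*n+1-i) = (if i+2 \<le> n then i+2 else 2*n+1-(i+2)) \<Longrightarrow> i+2 < 2*n+2 \<Longrightarrow> False"
        by presburger
      show False using ar[of i n] A B E i lW by simp
    qed
    ultimately have "distinct W" by (rule nb_distinct)
    moreover have "W ! 0 = c" using w1 W_def by (cases w1) auto
    moreover have "W ! (2*n+1) = c"
    proof -
      have "W ! (2*n+1) = rev w2 ! n" using w1 W_def by (simp add: nth_append)
      also have "\<dots> = w2 ! 0" using w2 by (simp add: rev_nth)
      finally show ?thesis using w2 ne2 by (simp add: hd_conv_nth)
    qed
    ultimately show False using lW nth_eq_iff_index_eq[of W 0 "2*n+1"] by simp
  qed
  ultimately show ?thesis by linarith
qed

lemma parent_unique: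
  assumes a: "adj v q" "adj v q'" and e: "d c q + 1 = d c v" "d c q' + 1 = d c v"
  shows "q = q'"
proof (rule ccontr)
  assume ne: "q \<noteq> q'"
  define n where "n = d c q"
  obtain w1 where w1: "walk adj w1" "hd w1 = c" "last w1 = q" "length w1 = n + 1" "\<forall>t < length w1. d c (w1!t) = t"
    using geo_from n_def by blast
  obtain w2 where w2: "walk adj w2" "hd w2 = c" "last w2 = q'" "length w2 = n + 1" "\<forall>t < length w2. d c (w2!t) = t"
    using geo_from[of c q'] n_def e by auto
  define W where "W = w1 @ v # rev w2"
  have lW: "length W = 2*n+3" using w1 w2 W_def by simp
  have ne2: "w2 \<noteq> []" using w2 by auto
  have Wnth: "d c (W!t) = (if t \<le> n then t else if t = n+1 then n+1 else 2*n+2-t)" if "t < length W" for t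
  proof (cases "t \<le> n")
    case True
    then have "W ! t = w1 ! t" using w1 W_def by (simp add: nth_append)
    then show ?thesis using True w1 by simp
  next
    case False
    note F = False
    show ?thesis
    proof (cases "t = n+1")
      case True
      then have Wt: "W ! t = v" using w1 W_def by (simp add: nth_append)
      have "d c v = n + 1" using e(1) n_def by simp
      then show ?thesis using True Wt by simp
    next
      case False
      have "W ! t = (v # rev w2) ! (t - (n+1))" using w1 W_def F by (simp add: nth_append)
      also have "t - (n+1) = Suc (t - (n+2))" using F False by simp
      finally have "W ! t = rev w2 ! (t - (n+2))" by simp
      also have "\<dots> = w2 ! (2*n+2-t)"
      proof -
        have tl: "t < 2*n+3" using that lW by simp
        have "t - (n+2) < length w2" using tl w2(4) F False by simp
        then have "rev w2 ! (t - (n+2)) = w2 ! (length w2 - Suc (t - (n+2)))" by (rule rev_nth)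
        moreover have "length w2 - Suc (t - (n+2)) = 2*n+2-t" using tl w2(4) F False by simp
        ultimately show ?thesis by simp
      qed
      finally have Wt: "W ! t = w2 ! (2*n+2-t)" .
      have idx: "2*n+2-t < length w2" using w2(4) F False by simp
      have "d c (w2 ! (2*n+2-t)) = 2*n+2-t" using w2(5) idx by blast
      then show ?thesis using F False Wt by simp
    qed
  qed
  have Wn: "W ! n = q"
  proof -
    have "W ! n = w1 ! n" using w1(4) W_def by (simp add: nth_append)
    also have "\<dots> = last w1" using w1(4) walk_nonempty[OF w1(1)] by (simp add: last_conv_nth)
    finally show ?thesis using w1(3) by simp
  qed
  have Wn2: "W ! (n+2) = q'"
  proof -
    have "W ! (n+2) = rev w2 ! 0" using w1 W_def by (simp add: nth_append)
    then show ?thesis using w2 ne2 by (simp add: hd_rev[symmetric] hd_conv_nth[symmetric])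
  qed
  have "walk adj (v # rev w2)"
    using walk_append_adj[of adj "[v]" "rev w2"] walk_rev[where adj=adj, OF sym w2(1)] w2 a ne2
    by (simp add: hd_rev)
  then have "walk adj W" unfolding W_def
    using walk_append_adj[OF w1(1), of "v # rev w2"] w1 sym[OF a(1)] by simp
  moreover have "\<And>i. i + 2 < length W \<Longrightarrow> W ! i \<noteq> W ! (i + 2)"
  proof
    fix i assume i: "i + 2 < length W" and eqW: "W ! i = W ! (i + 2)"
    have A: "d c (W!i) = (if i \<le> n then i else if i = n+1 then n+1 else 2*n+2-i)" using Wnth i by simp
    have B: "d c (W!(i+2)) = (if i+2 \<le> n then i+2 else if i+2 = n+1 then n+1 else 2*n+2-(i+2))" using Wnth i by simp
    have E: "d c (W!i) = d c (W!(i+2))" using eqW by simp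
    have ar: "\<And>i n::nat. (if i \<le> n then i else if i = n+1 then n+1 else 2*n+2-i) = (if i+2 \<le> n then i+2 else if i+2 = n+1 then n+1 else 2*n+2-(i+2)) \<Longrightarrow> i+2 < 2*n+3 \<Longrightarrow> i = n"
      by presburger
    have "i = n" using ar[of i n] A B E i lW by simp
    then show False using eqW Wn Wn2 ne by simp
  qed
  ultimately have "distinct W" by (rule nb_distinct)
  moreover have "W ! 0 = c" using w1 W_def by (cases w1) auto
  moreover have "W ! (2*n+2) = c"
  proof -
    have "W ! (2*n+2) = rev w2 ! n" using w1 W_def by (simp add: nth_append)
    also have "\<dots> = w2 ! 0" using w2 by (simp add: rev_nth)
    finally show ?thesis using w2 ne2 by (simp add: hd_conv_nth)
  qed
  ultimately show False using lW nth_eq_iff_index_eq[of W 0 "2*n+2"] by simp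
qed

end




context tr
begin

lemma parent_ex:
  assumes "u \<noteq> v" shows "\<exists>q. adj v q \<and> d u q + 1 = d u v"
proof -
  obtain w where w: "walk adj w" "hd w = u" "last w = v" "length w = d u v + 1" "\<forall>t < length w. d u (w!t) = t"
    using geo_from by blast
  have "d u v \<noteq> 0" using assms d_zero by blast
  then have L: "length w \<ge> 2" using w by simp
  define q where "q = w ! (length w - 2)"
  have "adj (w ! (length w - 2)) (w ! (length w - 2 + 1))" using w(1) L unfolding walk_def by simp
  moreover have "w ! (length w - 2 + 1) = v" using w(3) L walk_nonempty[OF w(1)]
    by (simp add: last_conv_nth) (metis Suc_diff_Suc Suc_le_lessD diff_Suc_1 numeral_2_eq_2)
  ultimately have "adj v q" using sym q_def by simp
  moreover have "d u q = length w - 2" using w(5) L q_def by simp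
  ultimately show ?thesis using w(4) L by (intro exI[of _ q]) simp
qed

lemma pc1:
  assumes zz: "adj z z'" and nz: "z \<noteq> v0" "z' \<noteq> v0" and q: "adj v0 q" "d z q + 1 = d z v0"
  shows "d z' q + 1 = d z' v0"
proof -
  have z1: "d z z' = 1" "d z' z = 1" using d_adj zz sym by auto
  have Lq: "d z' q = d z' v0 + 1 \<or> d z' v0 = d z' q + 1" using adj_levels[OF q(1), of z'] by simp
  have Lz: "d v0 z' = d v0 z + 1 \<or> d v0 z = d v0 z' + 1" using adj_levels[OF zz, of v0] by simp
  then show ?thesis
  proof
    assume A: "d v0 z' = d v0 z + 1"
    have "d z' q \<le> d z' z + d z q" by (rule d_tri)
    then have "d z' q + 1 < d z' v0 + 1" using A z1 q(2) d_sym[of z' v0] d_sym[of z v0] by simp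
    then show ?thesis using Lq by auto
  next
    assume B: "d v0 z = d v0 z' + 1"
    obtain q' where q': "adj v0 q'" "d z' q' + 1 = d z' v0" using parent_ex nz(2) by blast
    have "d z q' \<le> d z z' + d z' q'" by (rule d_tri)
    then have "d z q' + 1 < d z v0 + 1" using B z1 q'(2) d_sym[of z' v0] d_sym[of z v0] by simp
    moreover have "d z q' = d z v0 + 1 \<or> d z v0 = d z q' + 1" using adj_levels[OF q'(1), of z] by simp
    ultimately have "d z q' + 1 = d z v0" by auto
    then have "q = q'" using parent_unique[OF q(1) q'(1)] q(2) by simp
    then show ?thesis using q' by simp
  qed
qed

lemma pc_walk:
  "walk adj w \<Longrightarrow> (\<forall>z \<in> set w. z \<noteq> v0) \<Longrightarrow> adj v0 q \<Longrightarrow> d (hd w) q + 1 = d (hd w) v0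
   \<Longrightarrow> d (last w) q + 1 = d (last w) v0"
proof (induction w)
  case Nil then show ?case by (simp add: walk_def)
next
  case (Cons a w)
  show ?case
  proof (cases w)
    case Nil then show ?thesis using Cons.prems by simp
  next
    case (Cons b w')
    then have ab: "adj a b" "walk adj w" using Cons.prems(1) by (auto simp: walk_Cons_Cons)
    have "d b q + 1 = d b v0" using pc1[OF ab(1) _ _ Cons.prems(3)] Cons.prems \<open>w = b # w'\<close> by simp
    then have "d (last w) q + 1 = d (last w) v0" using Cons.IH ab Cons.prems \<open>w = b # w'\<close> by simp
    then show ?thesis using \<open>w = b # w'\<close> by simp
  qed
qed

lemma pc_jump:
  assumes uv: "d u v \<le> k" and u0: "d u v0 > k" and q: "adj v0 q" "d u q + 1 = d u v0"
  shows "d v q + 1 = d v v0"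
proof -
  obtain w where w: "walk adj w" "hd w = u" "last w = v" "length w = d u v + 1" "\<forall>t < length w. d u (w!t) = t"
    using geo_from by blast
  have "\<forall>z \<in> set w. z \<noteq> v0"
  proof
    fix z assume "z \<in> set w"
    then obtain t where t: "t < length w" "w ! t = z" by (metis in_set_conv_nth)
    then have "d u z = t" using w(5) by blast
    then have "d u z \<le> k" using t w(4) uv by simp
    then show "z \<noteq> v0" using u0 by auto
  qed
  then show ?thesis using pc_walk[OF w(1) _ q(1)] w q(2) by simp
qed

end

locale geo = tr +
  fixes xs :: "'a list" and x y :: 'a
  assumes geod: "is_geodesic adj xs x y"
begin

abbreviation "m \<equiv> length xs - 1"

lemma xs_walk: "walk adj xs" and xs_len: "length xs = d x y + 1" and xs_hd: "hd xs = x" and xs_last: "last xs = y"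
  using geod by (auto simp: is_geodesic_def)

lemma xs_ne: "xs \<noteq> []" using xs_walk walk_nonempty by blast

lemma m_eq: "m = d x y" using xs_len by simp

lemma xs0: "xs ! 0 = x" using xs_hd xs_ne by (simp add: hd_conv_nth)

lemma xsm: "xs ! m = y" using xs_last xs_ne by (simp add: last_conv_nth)

lemma xs_adj: "i < m \<Longrightarrow> adj (xs ! i) (xs ! (i+1))"
  using xs_walk unfolding walk_def by simp

lemma xs_lab: "i \<le> m \<Longrightarrow> d x (xs ! i) = i"
  using geo_label[OF xs_walk xs_hd] xs_len xs_last xs_ne by (metis Suc_eq_plus1 le_imp_less_Suc m_eq)

lemma xs_inj: "i \<le> m \<Longrightarrow> j \<le> m \<Longrightarrow> xs ! i = xs ! j \<Longrightarrow> i = j"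
  using xs_lab by metis

lemma V1: "i < m \<Longrightarrow> d c (xs!(i+1)) = d c (xs!i) + 1 \<or> d c (xs!i) = d c (xs!(i+1)) + 1"
  using adj_levels xs_adj by blast

lemma V2:
  assumes "i + 2 \<le> m" "d c (xs!(i+1)) = d c (xs!i) + 1"
  shows "d c (xs!(i+2)) = d c (xs!(i+1)) + 1"
proof (rule ccontr)
  assume n: "\<not> ?thesis"
  have "i + 1 < m" using assms by simp
  then have "d c (xs!(i+1+1)) = d c (xs!(i+1)) + 1 \<or> d c (xs!(i+1)) = d c (xs!(i+1+1)) + 1" by (rule V1)
  then have e2: "d c (xs!(i+2)) + 1 = d c (xs!(i+1))" using n by (simp add: add.assoc)
  have a1: "adj (xs!(i+1)) (xs!i)" using xs_adj[of i] assms sym by simp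
  have a2: "adj (xs!(i+1)) (xs!(i+2))" using xs_adj[of "i+1"] assms by (simp add: add.assoc)
  have h1: "d c (xs!i) + 1 = d c (xs!(i+1))" using assms(2) by simp
  have "xs!i = xs!(i+2)" using parent_unique[OF a1 a2, of c] h1 e2 by blast
  then show False using xs_inj[of i "i+2"] assms by simp
qed

lemma V3:
  assumes "d c (xs!(j+1)) = d c (xs!j) + 1"
  shows "j < l \<Longrightarrow> l \<le> m \<Longrightarrow> d c (xs!l) = d c (xs!(l-1)) + 1 \<and> d c (xs!l) = d c (xs!j) + (l - j)"
proof (induction l)
  case 0 then show ?case by simp
next
  case (Suc l)
  show ?case
  proof (cases "j = l")
    case True then show ?thesis using assms by simp
  next
    case False
    then have IH: "d c (xs!l) = d c (xs!(l-1)) + 1" "d c (xs!l) = d c (xs!j) + (l - j)" using Suc by auto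
    have "l - 1 + 2 \<le> m" "l - 1 + 1 = l" using Suc False by auto
    then have "d c (xs!(l-1+2)) = d c (xs!(l-1+1)) + 1" using V2[of "l-1" c] IH(1) by simp
    then have "d c (xs!(Suc l)) = d c (xs!l) + 1" using \<open>l - 1 + 1 = l\<close> by (metis Suc_1 add_Suc_right)
    then show ?thesis using IH Suc False by simp
  qed
qed

lemma V4: "i < j \<Longrightarrow> j \<le> m \<Longrightarrow> d c (xs!i) < d c (xs!j) \<Longrightarrow> d c (xs!j) = d c (xs!(j-1)) + 1"
proof (induction j)
  case 0 then show ?case by simp
next
  case (Suc j)
  have "j < m" using Suc by simp
  then have V: "d c (xs!(j+1)) = d c (xs!j) + 1 \<or> d c (xs!j) = d c (xs!(j+1)) + 1" by (rule V1)
  show ?case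
  proof (cases "i < j \<and> d c (xs!i) < d c (xs!j)")
    case True
    then have "d c (xs!j) = d c (xs!(j-1)) + 1" using Suc by simp
    moreover have "j - 1 + 2 \<le> m" "j - 1 + 1 = j" using True Suc by auto
    ultimately have "d c (xs!(j-1+2)) = d c (xs!(j-1+1)) + 1" using V2[of "j-1" c] by simp
    then show ?thesis using \<open>j - 1 + 1 = j\<close> by (metis Suc_1 add_Suc_right diff_Suc_1)
  next
    case False
    then have "d c (xs!j) \<le> d c (xs!i)" using Suc by (metis less_SucE not_le_imp_less order.refl)
    then show ?thesis using V Suc by auto
  qed
qed

lemma Vmono:
  assumes "i < j" "j \<le> l" "l \<le> m" "d c (xs!i) < d c (xs!j)"
  shows "d c (xs!l) = d c (xs!j) + (l - j)"
proof -
  have "d c (xs!j) = d c (xs!(j-1)) + 1" using V4 assms by simp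
  then have s: "d c (xs!(j-1+1)) = d c (xs!(j-1)) + 1" using assms by simp
  show ?thesis
  proof (cases "j = l")
    case True then show ?thesis by simp
  next
    case False
    have "j - 1 < l" "l \<le> m" using assms False by auto
    then have "d c (xs!l) = d c (xs!(l-1)) + 1 \<and> d c (xs!l) = d c (xs!(j-1)) + (l - (j-1))" by (rule V3[OF s])
    then have "d c (xs!l) = d c (xs!(j-1)) + (l - (j-1))" by blast
    then show ?thesis using \<open>d c (xs!j) = d c (xs!(j-1)) + 1\<close> assms False by simp
  qed
qed

lemma par_b:
  assumes "i < m" "d b (xs!i) > d b (xs!m)"
  shows "d b (xs!(i+1)) + 1 = d b (xs!i)"
proof -
  have "d b (xs!(i+1)) = d b (xs!i) + 1 \<or> d b (xs!i) = d b (xs!(i+1)) + 1" using V1 assms by blast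
  moreover have "d b (xs!(i+1)) \<noteq> d b (xs!i) + 1"
  proof
    assume "d b (xs!(i+1)) = d b (xs!i) + 1"
    then have "d b (xs!m) = d b (xs!(i+1)) + (m - (i+1))" using Vmono[of i "i+1" m b] assms by simp
    then show False using assms \<open>d b (xs!(i+1)) = d b (xs!i) + 1\<close> by simp
  qed
  ultimately show ?thesis by simp
qed

end




lemma cat_cons: "gs \<noteq> [] \<Longrightarrow> cat_paths (g # gs) = g @ tl (cat_paths gs)"
  by (cases gs) auto

lemma cat_ne: "\<forall>g \<in> set gs. g \<noteq> [] \<Longrightarrow> gs \<noteq> [] \<Longrightarrow> cat_paths gs \<noteq> []"
  by (induction gs rule: cat_paths.induct) auto

lemma adm_take: "admissible p w \<Longrightarrow> 0 < n \<Longrightarrow> admissible p (take n w)"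
  by (auto simp: admissible_def)

lemma adm_drop: "admissible p w \<Longrightarrow> n < length w \<Longrightarrow> admissible p (drop n w)"
  by (auto simp: admissible_def add.commute add.left_commute)

lemma adm_ne: "admissible p w \<Longrightarrow> w \<noteq> []"
  by (simp add: admissible_def)

lemma first_hit:
  assumes a: "a \<in> Ph_in p u e (- S)" and a': "a' \<in> Ph_in p u e' (- S)"
    and u: "u \<notin> S" and e: "e \<in> S" "e' \<in> S" and eq: "a @ r = a' @ r'"
  shows "a = a'"
proof -
  have ha: "admissible p a" "hd a = u" "last a = e" "\<forall>i. 0 < i \<and> i + 1 < length a \<longrightarrow> a ! i \<in> - S"
    using a by (auto simp: Ph_in_def Ph_def)
  have ha': "admissible p a'" "hd a' = u" "last a' = e'" "\<forall>i. 0 < i \<and> i + 1 < length a' \<longrightarrow> a' ! i \<in> - S"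
    using a' by (auto simp: Ph_in_def Ph_def)
  have ne: "a \<noteq> []" "a' \<noteq> []" using ha(1) ha'(1) adm_ne by auto
  have L: "length a \<ge> 2"
  proof (rule ccontr)
    assume "\<not> ?thesis"
    then have "length a = 1" using ne length_greater_0_conv[of a] by linarith
    then have "last a = hd a" using ne by (simp add: last_conv_nth hd_conv_nth)
    then show False using ha u e by simp
  qed
  have L': "length a' \<ge> 2"
  proof (rule ccontr)
    assume "\<not> ?thesis"
    then have "length a' = 1" using ne length_greater_0_conv[of a'] by linarith
    then have "last a' = hd a'" using ne by (simp add: last_conv_nth hd_conv_nth)
    then show False using ha' u e by simp
  qed
  have la: "a ! (length a - 1) \<in> S" using ha(3) ne e by (simp add: last_conv_nth)
  have la': "a' ! (length a' - 1) \<in> S" using ha'(3) ne e by (simp add: last_conv_nth)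
  have "\<not> length a < length a'"
  proof
    assume lt: "length a < length a'"
    have idx: "length a - 1 < length a'" using lt by simp
    have "a' ! (length a - 1) = (a' @ r') ! (length a - 1)" using idx by (simp only: nth_append if_True)
    also have "\<dots> = (a @ r) ! (length a - 1)" using eq by simp
    also have "\<dots> = a ! (length a - 1)"
    proof -
      have i2: "length a - 1 < length a" using L by simp
      show ?thesis by (simp only: nth_append i2 if_True)
    qed
    finally have "a' ! (length a - 1) \<in> S" using la by simp
    moreover have "a' ! (length a - 1) \<in> - S" using ha'(4) L lt by simp
    ultimately show False by simp
  qed
  moreover have "\<not> length a' < length a"
  proof
    assume lt: "length a' < length a"
    have idx: "length a' - 1 < length a" using lt by simp
    have "a ! (length a' - 1) = (a @ r) ! (length a' - 1)" using idx by (simp only: nth_append if_True)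
    also have "\<dots> = (a' @ r') ! (length a' - 1)" using eq by simp
    also have "\<dots> = a' ! (length a' - 1)"
    proof -
      have i2: "length a' - 1 < length a'" using L' by simp
      show ?thesis by (simp only: nth_append i2 if_True)
    qed
    finally have "a ! (length a' - 1) \<in> S" using la' by simp
    moreover have "a ! (length a' - 1) \<in> - S" using ha(4) L' lt by simp
    ultimately show False by simp
  qed
  ultimately have "length a = length a'" by simp
  then show ?thesis using eq by (metis append_eq_append_conv)
qed

definition Qd where
  "Qd adj k p xs b ii g c gs gf \<longleftrightarrow>
     c \<noteq> [] \<and> (\<forall>s < length c - 1. ii s < ii (s+1)) \<and> ii (length c - 1) \<le> length xs - 1 \<and>
     (\<forall>j \<le> length c - 1. c ! j \<in> Ball_k adj k (xs ! ii j)) \<and>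
     (\<forall>j < length c - 1. c ! j \<in> bdry_k adj k (xs ! ii (j+1))) \<and>
     c ! (length c - 1) \<in> Ball_k adj k (xs ! (length xs - 1)) \<and>
     length gs = length c - 1 \<and>
     (\<forall>s. 1 \<le> s \<and> s \<le> length c - 1 \<longrightarrow> gs ! (s-1) \<in> Ph_in p (c ! (s-1)) (c ! s) (- Ball_k adj k (xs ! ii s))) \<and>
     gf \<in> Ph p (c ! (length c - 1)) b \<and> g = cat_paths (gs @ [gf])"

lemma chain_mono:
  assumes "\<forall>s < l. (ii::nat\<Rightarrow>nat) s < ii (s+1)" "a \<le> c" "c \<le> l"
  shows "ii a + (c - a) \<le> ii c"
  using assms(2,3)
proof (induction c)
  case 0 then show ?case by simp
next
  case (Suc c)
  show ?case
  proof (cases "a = Suc c")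
    case True then show ?thesis by simp
  next
    case False
    then have "ii a + (c - a) \<le> ii c" using Suc by simp
    moreover have "ii c < ii (Suc c)" using assms(1) Suc by simp
    ultimately show ?thesis using Suc False by simp
  qed
qed

lemma Qd_hd:
  assumes "Qd adj k p xs b ii g c gs gf"
  shows "g \<noteq> [] \<and> hd g = c ! 0"
proof (cases gs)
  case Nil
  have "c \<noteq> []" "length gs = length c - 1" using assms unfolding Qd_def by auto
  then have c1: "length c = 1" using Nil by (cases c) (auto simp: le_Suc_eq)
  then have "g = gf" "gf \<in> Ph p (c ! 0) b" using assms Nil unfolding Qd_def by auto
  then show ?thesis by (auto simp: Ph_def admissible_def)
next
  case (Cons a gs')
  then have l: "length c - 1 \<ge> 1" using assms unfolding Qd_def by auto
  then have "a \<in> Ph_in p (c ! 0) (c ! 1) (- Ball_k adj k (xs ! ii 1))" using assms Cons unfolding Qd_def by force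
  then have "a \<noteq> []" "hd a = c ! 0" by (auto simp: Ph_in_def Ph_def admissible_def)
  moreover have "g = a @ tl (cat_paths (gs' @ [gf]))"
  proof -
    have "g = cat_paths (a # (gs' @ [gf]))" using assms Cons unfolding Qd_def by simp
    also have "\<dots> = a @ tl (cat_paths (gs' @ [gf]))" by (rule cat_cons) simp
    finally show ?thesis .
  qed
  ultimately show ?thesis by simp
qed

context geo
begin

lemma inB: "v \<in> Ball_k adj k w \<longleftrightarrow> d v w \<le> k"
  by (simp add: Ball_k_def d_sym)

lemma inD: "v \<in> bdry_k adj k w \<longleftrightarrow> d v w = k + 1"
  by (simp add: bdry_k_def d_sym)

lemma hit:
  assumes rng: "\<And>u v. p u v > 0 \<Longrightarrow> d u v \<le> k"
    and i: "0 < i" "i \<le> m" and g: "admissible p g" "hd g = c" "last g = b"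
    and bm: "d b (xs ! m) \<le> k"
    and pc: "d c (xs!(i-1)) + 1 = d c (xs!i)" and cout: "d c (xs!i) > k"
  shows "\<exists>t < length g. d (g!t) (xs!i) \<le> k"
proof (rule ccontr)
  assume "\<not> ?thesis"
  then have out: "\<forall>t < length g. d (g!t) (xs!i) > k" by auto
  have ne: "g \<noteq> []" using g adm_ne by blast
  have aq: "adj (xs!i) (xs!(i-1))" using xs_adj[of "i-1"] i sym by simp
  have all: "t < length g \<Longrightarrow> d (g!t) (xs!(i-1)) + 1 = d (g!t) (xs!i)" for t
  proof (induction t)
    case 0 then show ?case using g ne pc by (simp add: hd_conv_nth)
  next
    case (Suc t)
    then have "p (g!t) (g!(t+1)) > 0" using g(1) unfolding admissible_def by simp
    then have "d (g!t) (g!(t+1)) \<le> k" by (rule rng)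
    moreover have "d (g!t) (xs!i) > k" using out Suc by simp
    ultimately show ?case using pc_jump[OF _ _ aq] Suc by simp
  qed
  have "g ! (length g - 1) = b" using g ne by (simp add: last_conv_nth)
  then have pb: "d b (xs!(i-1)) + 1 = d b (xs!i)" and bout: "d b (xs!i) > k"
    using all[of "length g - 1"] out ne by auto
  then have "i \<noteq> m" using bm by auto
  then have "i < m" using i by simp
  then have pb2: "d b (xs!(i+1)) + 1 = d b (xs!i)" using par_b bout bm by simp
  have aq2: "adj (xs!i) (xs!(i+1))" using xs_adj \<open>i < m\<close> by simp
  have "xs!(i-1) = xs!(i+1)" using parent_unique[OF aq aq2, of b] pb pb2 by simp
  moreover have "i - 1 \<le> m" "i + 1 \<le> m" using \<open>i < m\<close> by simp_all
  ultimately have "i - 1 = i + 1" using xs_inj by blast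
  then show False using i by simp
qed

end




lemma Qd_nil:
  assumes "Qd adj k p xs b ii g c [] gf"
  shows "length c = 1 \<and> g = gf \<and> c ! 0 \<in> Ball_k adj k (xs ! (length xs - 1)) \<and> ii 0 \<le> length xs - 1
         \<and> c ! 0 \<in> Ball_k adj k (xs ! ii 0) \<and> gf \<in> Ph p (c ! 0) b"
proof -
  have "c \<noteq> []" "length c - 1 = 0" using assms unfolding Qd_def by auto
  then have c1: "length c = 1" by (cases c) auto
  then show ?thesis using assms unfolding Qd_def by auto
qed

lemma Qd_step:
  assumes Q: "Qd adj k p xs b ii g c (a # gs) gf"
  shows "length c \<ge> 2 \<and> ii 0 < ii 1 \<and> ii 1 \<le> length xs - 1 \<and> c ! 0 \<in> Ball_k adj k (xs ! ii 0)
    \<and> c ! 0 \<in> bdry_k adj k (xs ! ii 1) \<and> c ! 1 \<in> Ball_k adj k (xs ! ii 1)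
    \<and> a \<in> Ph_in p (c ! 0) (c ! 1) (- Ball_k adj k (xs ! ii 1))
    \<and> Qd adj k p xs b (\<lambda>s. ii (Suc s)) (cat_paths (gs @ [gf])) (tl c) gs gf
    \<and> g = a @ tl (cat_paths (gs @ [gf]))"
proof -
  define L where "L = length c - 1"
  have q: "c \<noteq> []" "\<forall>s < L. ii s < ii (s+1)" "ii L \<le> length xs - 1"
    "\<forall>j \<le> L. c ! j \<in> Ball_k adj k (xs ! ii j)"
    "\<forall>j < L. c ! j \<in> bdry_k adj k (xs ! ii (j+1))"
    "c ! L \<in> Ball_k adj k (xs ! (length xs - 1))"
    "length (a # gs) = L"
    "\<forall>s. 1 \<le> s \<and> s \<le> L \<longrightarrow> (a # gs) ! (s-1) \<in> Ph_in p (c ! (s-1)) (c ! s) (- Ball_k adj k (xs ! ii s))"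
    "gf \<in> Ph p (c ! L) b" "g = cat_paths ((a # gs) @ [gf])"
    using Q unfolding Qd_def L_def by auto
  have L1: "L \<ge> 1" using q(7) by simp
  have lc: "length c \<ge> 2" using L1 L_def by simp
  have i01: "ii 0 < ii 1" using q(2) L1 by auto
  have "ii 1 + (L - 1) \<le> ii L" using chain_mono[OF q(2), of 1 L] L1 by simp
  then have i1m: "ii 1 \<le> length xs - 1" using q(3) by simp
  have ga: "g = a @ tl (cat_paths (gs @ [gf]))"
  proof -
    have "g = cat_paths (a # (gs @ [gf]))" using q(10) by simp
    also have "\<dots> = a @ tl (cat_paths (gs @ [gf]))" by (rule cat_cons) simp
    finally show ?thesis .
  qed
  have aP: "a \<in> Ph_in p (c ! 0) (c ! 1) (- Ball_k adj k (xs ! ii 1))" using q(8)[rule_format, of 1] L1 by simp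
  have ltc: "length (tl c) - 1 = L - 1" using L_def by simp
  have tn: "\<And>j. tl c ! j = c ! Suc j" using q(1) by (cases c) auto
  have "Qd adj k p xs b (\<lambda>s. ii (Suc s)) (cat_paths (gs @ [gf])) (tl c) gs gf"
    unfolding Qd_def ltc tn
  proof (intro conjI allI impI)
    show "tl c \<noteq> []" using lc by (cases c) auto
    show "ii (Suc s) < ii (Suc (s+1))" if "s < L - 1" for s using q(2) that by simp
    show "ii (Suc (L - 1)) \<le> length xs - 1" using q(3) L1 by simp
    show "c ! Suc j \<in> Ball_k adj k (xs ! ii (Suc j))" if "j \<le> L - 1" for j using q(4) that L1 by simp
    show "c ! Suc j \<in> bdry_k adj k (xs ! ii (Suc (j+1)))" if "j < L - 1" for j using q(5) that by simp
    show "c ! Suc (L - 1) \<in> Ball_k adj k (xs ! (length xs - 1))" using q(6) L1 by simp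
    show "length gs = L - 1" using q(7) by simp
    show "gs ! (s - 1) \<in> Ph_in p (c ! Suc (s - 1)) (c ! Suc s) (- Ball_k adj k (xs ! ii (Suc s)))"
      if hs: "1 \<le> s \<and> s \<le> L - 1" for s
    proof -
      have "Suc s \<le> L" using hs L1 by linarith
      moreover obtain s' where "s = Suc s'" using hs by (cases s) auto
      ultimately show ?thesis using q(8)[rule_format, of "Suc s"] by simp
    qed
    show "gf \<in> Ph p (c ! Suc (L - 1)) b" using q(9) L1 by simp
  qed simp
  then show ?thesis using lc i01 i1m q(4) q(5) L1 aP ga by auto
qed

context geo
begin

lemma stop_contra:
  assumes "d u (xs!ia) \<le> k" "d u (xs!j) = k+1" "ia < j" "j \<le> m" "d u (xs!m) \<le> k"
  shows False
proof -
  have "d u (xs!m) = d u (xs!j) + (m - j)" using Vmono[of ia j m u] assms by simp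
  then show False using assms by simp
qed

lemma cross_uniq:
  assumes "d u (xs!ia) \<le> k" "d u (xs!j) = k+1" "d u (xs!j') = k+1" "ia < j" "ia < j'" "j \<le> m" "j' \<le> m"
  shows "j = j'"
proof (rule ccontr)
  assume "j \<noteq> j'"
  then consider "j < j'" | "j' < j" by linarith
  then show False
  proof cases
    case 1
    then have "d u (xs!j') = d u (xs!j) + (j' - j)" using Vmono[of ia j j' u] assms by simp
    then show False using assms 1 by simp
  next
    case 2
    then have "d u (xs!j) = d u (xs!j') + (j - j')" using Vmono[of ia j' j u] assms by simp
    then show False using assms 2 by simp
  qed
qed

lemma uniq:
  "Qd adj k p xs b ii g c gs gf \<Longrightarrow> Qd adj k p xs b jj g c' gs' gf' \<Longrightarrow> ii 0 = jj 0
   \<Longrightarrow> c = c' \<and> gs = gs' \<and> gf = gf'"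
proof (induction gs arbitrary: ii jj g c c' gs' gf')
  case Nil
  note N = Qd_nil[OF Nil.prems(1)]
  have h1: "g \<noteq> [] \<and> hd g = c ! 0" using Qd_hd[OF Nil.prems(1)] .
  have h2: "g \<noteq> [] \<and> hd g = c' ! 0" using Qd_hd[OF Nil.prems(2)] .
  show ?case
  proof (cases gs')
    case Nil
    note N' = Qd_nil[OF Nil.prems(2)[unfolded Nil]]
    have "c = [c ! 0]" using N by (cases c) auto
    moreover have "c' = [c' ! 0]" using N' by (cases c') auto
    ultimately show ?thesis using h1 h2 N N' Nil by metis
  next
    case (Cons a' gs'')
    note S' = Qd_step[OF Nil.prems(2)[unfolded Cons]]
    have "d (c!0) (xs!jj 0) \<le> k" "d (c!0) (xs!jj 1) = k+1" "d (c!0) (xs!m) \<le> k"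
      using S' N h1 h2 by (auto simp: inB inD)
    then show ?thesis using stop_contra[where u="c!0" and ia="jj 0" and j="jj 1"] S' by blast
  qed
next
  case (Cons a gs ii jj g c c' gs' gf')
  note S = Qd_step[OF Cons.prems(1)]
  have h1: "g \<noteq> [] \<and> hd g = c ! 0" using Qd_hd[OF Cons.prems(1)] .
  have h2: "g \<noteq> [] \<and> hd g = c' ! 0" using Qd_hd[OF Cons.prems(2)] .
  show ?case
  proof (cases gs')
    case Nil
    note N' = Qd_nil[OF Cons.prems(2)[unfolded Nil]]
    have "d (c!0) (xs!ii 0) \<le> k" "d (c!0) (xs!ii 1) = k+1" "d (c!0) (xs!m) \<le> k"
      using S N' h1 h2 by (auto simp: inB inD)
    then show ?thesis using stop_contra[where u="c!0" and ia="ii 0" and j="ii 1"] S by blast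
  next
    case (Cons a' gs'')
    note S' = Qd_step[OF Cons.prems(2)[unfolded Cons]]
    have c00: "c' ! 0 = c ! 0" using h1 h2 by simp
    have "ii 1 = jj 1"
      using cross_uniq[where u="c!0" and ia="ii 0" and j="ii 1" and j'="jj 1"] S S' c00 Cons.prems(3) by (auto simp: inB inD)
    have eqg: "a @ tl (cat_paths (gs @ [gf])) = a' @ tl (cat_paths (gs'' @ [gf']))" using S S' by simp
    have m1: "a \<in> Ph_in p (c!0) (c!1) (- Ball_k adj k (xs ! ii 1))" using S by blast
    have m2: "a' \<in> Ph_in p (c!0) (c'!1) (- Ball_k adj k (xs ! ii 1))" using S' c00 \<open>ii 1 = jj 1\<close> by simp
    have u0: "c!0 \<notin> Ball_k adj k (xs!ii 1)" using S by (auto simp: inB inD)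
    have e1: "c!1 \<in> Ball_k adj k (xs!ii 1)" using S by blast
    have e2: "c'!1 \<in> Ball_k adj k (xs!ii 1)" using S' \<open>ii 1 = jj 1\<close> by simp
    have a_eq: "a = a'" by (rule first_hit[OF m1 m2 u0 e1 e2 eqg])
    define gr where "gr = cat_paths (gs @ [gf])"
    define gr' where "gr' = cat_paths (gs'' @ [gf'])"
    have Qr: "Qd adj k p xs b (\<lambda>s. ii (Suc s)) gr (tl c) gs gf" using S gr_def by simp
    have Qr': "Qd adj k p xs b (\<lambda>s. jj (Suc s)) gr' (tl c') gs'' gf'" using S' gr'_def by simp
    have hr: "gr \<noteq> [] \<and> hd gr = tl c ! 0" using Qd_hd[OF Qr] .
    have hr': "gr' \<noteq> [] \<and> hd gr' = tl c' ! 0" using Qd_hd[OF Qr'] .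
    have "tl c ! 0 = c ! 1" using S by (cases c) auto
    moreover have "tl c' ! 0 = c' ! 1" using S' by (cases c') auto
    moreover have "last a = c ! 1" "last a' = c' ! 1" using S S' by (auto simp: Ph_in_def Ph_def)
    ultimately have "hd gr = hd gr'" using hr hr' a_eq by simp
    moreover have "tl gr = tl gr'" using S S' gr_def gr'_def a_eq by simp
    ultimately have "gr = gr'" using hr hr' by (metis list.collapse)
    then have IH: "tl c = tl c' \<and> gs = gs'' \<and> gf = gf'"
      using Cons.IH[OF Qr] Qr' \<open>ii 1 = jj 1\<close> by simp
    have "c = c'"
    proof -
      have "c \<noteq> []" "c' \<noteq> []" using S S' by auto
      then show ?thesis using IH c00 by (metis hd_conv_nth list.collapse)
    qed
    then show ?thesis using IH a_eq Cons by simp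
  qed
qed

end




context geo
begin

lemma exist:
  assumes rng: "\<And>u v. p u v > 0 \<Longrightarrow> d u v \<le> k" and bm: "d b (xs!m) \<le> k"
  shows "admissible p g \<Longrightarrow> hd g = c0 \<Longrightarrow> last g = b \<Longrightarrow> ia \<le> m \<Longrightarrow> d c0 (xs!ia) \<le> k \<Longrightarrow>
         \<exists>ii c gs gf. ii 0 = ia \<and> Qd adj k p xs b ii g c gs gf"
proof (induction "length g" arbitrary: g c0 ia rule: less_induct)
  case less
  have gne: "g \<noteq> []" using less.prems(1) adm_ne by blast
  show ?case
  proof (cases "d c0 (xs!m) \<le> k")
    case True
    have "Qd adj k p xs b (\<lambda>_. ia) g [c0] [] g"
      unfolding Qd_def using less.prems True by (simp add: inB Ph_def)
    then show ?thesis
      by (intro exI[where x="\<lambda>_. ia"] exI[where x="[c0]"] exI[where x="[]"] exI[where x=g]) simp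
  next
    case False
    define S where "S = {i. i \<le> m \<and> d c0 (xs!i) \<le> k}"
    have finS: "finite S" unfolding S_def by (rule finite_subset[of _ "{..m}"]) auto
    have i0S: "ia \<in> S" using less.prems S_def by simp
    have MS: "Max S \<in> S" using finS i0S Max_in by blast
    have i0M: "ia \<le> Max S" using finS i0S by simp
    have "Max S \<noteq> m" using MS False S_def by auto
    moreover have "Max S \<le> m" using MS S_def by simp
    ultimately have Mm: "Max S < m" by simp
    define i1 where "i1 = Suc (Max S)"
    have i1m: "i1 \<le> m" "0 < i1" using Mm i1_def by auto
    have i01: "ia < i1" using i0M i1_def by simp
    have out1: "d c0 (xs!i1) > k"
    proof (rule ccontr)
      assume "\<not> ?thesis"
      then have "i1 \<in> S" using S_def i1m by simp
      then have "i1 \<le> Max S" using finS by simp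
      then show False using i1_def by simp
    qed
    have "d c0 (xs!i1) \<le> d c0 (xs!(Max S)) + d (xs!(Max S)) (xs!i1)" by (rule d_tri)
    moreover have "d (xs!(Max S)) (xs!i1) = 1" using d_adj xs_adj[OF Mm] i1_def by simp
    moreover have "d c0 (xs!(Max S)) \<le> k" using MS S_def by simp
    ultimately have eq1: "d c0 (xs!i1) = k + 1" using out1 by simp
    have pc: "d c0 (xs!(i1-1)) + 1 = d c0 (xs!i1)"
      using V4[of ia i1 c0] i01 i1m less.prems(5) out1 by simp
    have "\<exists>t < length g. d (g!t) (xs!i1) \<le> k"
      by (rule hit[OF rng i1m(2) i1m(1) less.prems(1-3) bm pc out1])
    define t where "t = (LEAST t. t < length g \<and> d (g!t) (xs!i1) \<le> k)"
    have tP: "t < length g" "d (g!t) (xs!i1) \<le> k"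
      using LeastI_ex[OF \<open>\<exists>t < length g. d (g!t) (xs!i1) \<le> k\<close>] t_def by auto
    have tmin: "\<And>t'. t' < t \<Longrightarrow> d (g!t') (xs!i1) > k"
    proof -
      fix t' assume "t' < t"
      then have "\<not> (t' < length g \<and> d (g!t') (xs!i1) \<le> k)" using not_less_Least t_def by blast
      then show "d (g!t') (xs!i1) > k" using \<open>t' < t\<close> tP by auto
    qed
    have g0: "g ! 0 = c0" using less.prems gne by (simp add: hd_conv_nth)
    have t0: "t \<noteq> 0"
    proof
      assume "t = 0"
      then have "d c0 (xs!i1) \<le> k" using tP g0 by simp
      then show False using out1 by simp
    qed
    define g' where "g' = drop t g"
    have lg': "length g' < length g" using g'_def t0 tP by simp
    have ag': "admissible p g'" using adm_drop less.prems(1) tP g'_def by blast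
    have hg': "hd g' = g ! t" using g'_def tP by (simp add: hd_drop_conv_nth)
    have lastg': "last g' = b" using g'_def tP less.prems(3) by simp
    obtain ii' c' gs' gf' where IH: "ii' 0 = i1" "Qd adj k p xs b ii' g' c' gs' gf'"
      using less.hyps[OF lg' ag' hg' lastg' i1m(1) tP(2)] by blast
    have c'0: "c' ! 0 = g ! t" using Qd_hd[OF IH(2)] hg' by simp
    define w1 where "w1 = take (t+1) g"
    have w1P: "w1 \<in> Ph_in p c0 (c' ! 0) (- Ball_k adj k (xs ! i1))"
    proof -
      have "admissible p w1" unfolding w1_def by (rule adm_take[OF less.prems(1)]) simp
      moreover have "hd w1 = c0" using w1_def less.prems gne by simp
      moreover have "last w1 = c' ! 0" using w1_def c'0 tP by (simp add: take_Suc_conv_app_nth)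
      moreover have "\<forall>i. 0 < i \<and> i + 1 < length w1 \<longrightarrow> w1 ! i \<in> - Ball_k adj k (xs ! i1)"
        using tmin w1_def tP by (auto simp: inB) (meson leD tmin)
      ultimately show ?thesis by (simp add: Ph_in_def Ph_def)
    qed
    define L where "L = length c' - 1"
    have q: "c' \<noteq> []" "\<forall>s < L. ii' s < ii' (s+1)" "ii' L \<le> length xs - 1"
      "\<forall>j \<le> L. c' ! j \<in> Ball_k adj k (xs ! ii' j)"
      "\<forall>j < L. c' ! j \<in> bdry_k adj k (xs ! ii' (j+1))"
      "c' ! L \<in> Ball_k adj k (xs ! (length xs - 1))"
      "length gs' = L"
      "\<forall>s. 1 \<le> s \<and> s \<le> L \<longrightarrow> gs' ! (s-1) \<in> Ph_in p (c' ! (s-1)) (c' ! s) (- Ball_k adj k (xs ! ii' s))"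
      "gf' \<in> Ph p (c' ! L) b" "g' = cat_paths (gs' @ [gf'])"
      using IH(2) unfolding Qd_def L_def by auto
    define II where "II = case_nat ia ii'"
    have lc: "length (c0 # c') - 1 = Suc L" using q(1) L_def by simp
    have QQ: "Qd adj k p xs b II g (c0 # c') (w1 # gs') gf'"
      unfolding Qd_def lc
    proof (intro conjI allI impI)
      show "II s < II (s + 1)" if "s < Suc L" for s
        using that q(2) i01 IH(1) unfolding II_def by (cases s) auto
      show "II (Suc L) \<le> length xs - 1" using q(3) II_def by simp
      show "(c0 # c') ! j \<in> Ball_k adj k (xs ! II j)" if "j \<le> Suc L" for j
        using that q(4) less.prems(5) unfolding II_def by (cases j) (auto simp: inB)
      show "(c0 # c') ! j \<in> bdry_k adj k (xs ! II (j+1))" if "j < Suc L" for j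
        using that q(5) eq1 IH(1) unfolding II_def by (cases j) (auto simp: inD)
      show "(c0 # c') ! Suc L \<in> Ball_k adj k (xs ! (length xs - 1))" using q(6) by simp
      show "length (w1 # gs') = Suc L" using q(7) by simp
      show "(w1 # gs') ! (s - 1) \<in> Ph_in p ((c0 # c') ! (s - 1)) ((c0 # c') ! s) (- Ball_k adj k (xs ! II s))"
        if hs: "1 \<le> s \<and> s \<le> Suc L" for s
      proof (cases "s = 1")
        case True then show ?thesis using w1P IH(1) II_def by simp
      next
        case False
        then obtain s' where s': "s = Suc (Suc s')" using hs by (cases s; cases "s - 1") auto
        then have "gs' ! s' \<in> Ph_in p (c' ! s') (c' ! Suc s') (- Ball_k adj k (xs ! ii' (Suc s')))"
          using q(8)[rule_format, of "Suc s'"] hs by simp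
        then show ?thesis using s' II_def by simp
      qed
      show "gf' \<in> Ph p ((c0 # c') ! Suc L) b" using q(9) by simp
      show "g = cat_paths ((w1 # gs') @ [gf'])"
      proof -
        have "cat_paths ((w1 # gs') @ [gf']) = w1 @ tl (cat_paths (gs' @ [gf']))" by (simp add: cat_cons)
        also have "\<dots> = take (t+1) g @ tl (drop t g)" using q(10) w1_def g'_def by simp
        also have "\<dots> = g" by (metis Suc_eq_plus1 append_take_drop_id drop_Suc tl_drop)
        finally show ?thesis by simp
      qed
    qed simp
    moreover have "II 0 = ia" using II_def by simp
    ultimately show ?thesis by blast
  qed
qed

end




definition Pd where
  "Pd adj k p xs b \<gamma> c gs gf ii \<longleftrightarrow>
           Xi_geod_with adj k p xs c ii \<and>
           length gs = length c - 1 \<and>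
           (\<forall>s. 1 \<le> s \<and> s \<le> length c - 1 \<longrightarrow>
              gs ! (s - 1) \<in> Ph_in p (c ! (s - 1)) (c ! s) (- Ball_k adj k (xs ! ii s))) \<and>
           gf \<in> Ph p (c ! (length c - 1)) b \<and>
           \<gamma> = cat_paths (gs @ [gf])"

lemma P_to_Q:
  assumes "Pd adj k p xs b g c gs gf ii"
  shows "Qd adj k p xs b (ii(0:=0)) g c gs gf \<and> 0 < length c - 1"
proof -
  define l where "l = length c - 1"
  define m where "m = length xs - 1"
  have X: "c \<noteq> []" "0 < l" "l \<le> m" "0 < ii 1" "\<forall>s. 1 \<le> s \<and> s < l \<longrightarrow> ii s < ii (s + 1)" "ii l \<le> m"
    "c ! 0 \<in> Ball_k adj k (xs ! 0) \<inter> bdry_k adj k (xs ! ii 1)"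
    "\<forall>j. 1 \<le> j \<and> j < l \<longrightarrow> c ! j \<in> Ball_k adj k (xs ! ii j) \<inter> bdry_k adj k (xs ! ii (j + 1))"
    "c ! l \<in> Ball_k adj k (xs ! ii l) \<inter> Ball_k adj k (xs ! m)"
    using assms unfolding Pd_def Xi_geod_with_def Let_def l_def m_def by auto
  have R: "length gs = l"
    "\<forall>s. 1 \<le> s \<and> s \<le> l \<longrightarrow> gs ! (s - 1) \<in> Ph_in p (c ! (s - 1)) (c ! s) (- Ball_k adj k (xs ! ii s))"
    "gf \<in> Ph p (c ! l) b" "g = cat_paths (gs @ [gf])"
    using assms unfolding Pd_def l_def by auto
  have "Qd adj k p xs b (ii(0:=0)) g c gs gf"
    unfolding Qd_def l_def[symmetric] m_def[symmetric]
  proof (intro conjI allI impI)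
    show "c \<noteq> []" by fact
    show "(ii(0:=0)) s < (ii(0:=0)) (s+1)" if "s < l" for s
      using X(4) X(5) that by (cases s) auto
    show "(ii(0:=0)) l \<le> m" using X(2) X(6) by simp
    show "c ! j \<in> Ball_k adj k (xs ! (ii(0:=0)) j)" if "j \<le> l" for j
      using X(7) X(8) X(9) that by (cases "j = 0"; cases "j = l") auto
    show "c ! j \<in> bdry_k adj k (xs ! (ii(0:=0)) (j+1))" if "j < l" for j
      using X(7) X(8) that by (cases "j = 0") auto
    show "c ! l \<in> Ball_k adj k (xs ! m)" using X(9) by simp
    show "length gs = l" by fact
    show "gs ! (s - 1) \<in> Ph_in p (c ! (s - 1)) (c ! s) (- Ball_k adj k (xs ! (ii(0:=0)) s))"
      if "1 \<le> s \<and> s \<le> l" for s using R(2) that by auto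
    show "gf \<in> Ph p (c ! l) b" by fact
    show "g = cat_paths (gs @ [gf])" by fact
  qed
  then show ?thesis using X(2) l_def by simp
qed

lemma Q_to_P:
  assumes Q: "Qd adj k p xs b ii g c gs gf" and i0: "ii 0 = 0" and l0: "0 < length c - 1"
  shows "Pd adj k p xs b g c gs gf ii"
proof -
  define l where "l = length c - 1"
  define m where "m = length xs - 1"
  have q: "c \<noteq> []" "\<forall>s < l. ii s < ii (s+1)" "ii l \<le> m"
    "\<forall>j \<le> l. c ! j \<in> Ball_k adj k (xs ! ii j)"
    "\<forall>j < l. c ! j \<in> bdry_k adj k (xs ! ii (j+1))"
    "c ! l \<in> Ball_k adj k (xs ! m)"
    "length gs = l"
    "\<forall>s. 1 \<le> s \<and> s \<le> l \<longrightarrow> gs ! (s-1) \<in> Ph_in p (c ! (s-1)) (c ! s) (- Ball_k adj k (xs ! ii s))"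
    "gf \<in> Ph p (c ! l) b" "g = cat_paths (gs @ [gf])"
    using Q unfolding Qd_def l_def m_def by auto
  have lpos: "0 < l" using l0 l_def by simp
  have "ii 0 + (l - 0) \<le> ii l" using chain_mono[OF q(2), of 0 l] by simp
  then have lm: "l \<le> m" using q(3) i0 by simp
  have "Xi_geod_with adj k p xs c ii"
    unfolding Xi_geod_with_def Let_def l_def[symmetric] m_def[symmetric]
  proof (intro conjI allI impI)
    show "c \<noteq> []" by fact
    show "0 < l" by fact
    show "l \<le> m" by fact
    show "0 < ii 1" using q(2) lpos i0 by force
    show "ii s < ii (s+1)" if "1 \<le> s \<and> s < l" for s using q(2) that by simp
    show "ii l \<le> m" by fact
    show "c ! 0 \<in> Ball_k adj k (xs ! 0) \<inter> bdry_k adj k (xs ! ii 1)"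
      using q(4) q(5) lpos i0 by force
    show "c ! j \<in> Ball_k adj k (xs ! ii j) \<inter> bdry_k adj k (xs ! ii (j + 1))" if "1 \<le> j \<and> j < l" for j
      using q(4) q(5) that by simp
    show "c ! l \<in> Ball_k adj k (xs ! ii l) \<inter> Ball_k adj k (xs ! m)" using q(4) q(6) by simp
    show "(c ! (j - 1), c ! j) \<in> Xi adj k p (xs ! ii j)" if "1 \<le> j \<and> j \<le> l" for j
    proof -
      have jl: "j - 1 < l" using that by linarith
      have "c ! (j - 1) \<in> bdry_k adj k (xs ! (ii (j - 1 + 1)))" using q(5) jl by blast
      moreover have "j - 1 + 1 = j" using that by simp
      ultimately have "c ! (j - 1) \<in> bdry_k adj k (xs ! ii j)" by simp
      moreover have "c ! j \<in> Ball_k adj k (xs ! ii j)" using q(4) that by simp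
      moreover have "gs ! (j - 1) \<in> Ph_in p (c ! (j-1)) (c ! j) (- Ball_k adj k (xs ! ii j))" using q(8) that by simp
      ultimately show ?thesis unfolding Xi_def by blast
    qed
  qed
  then show ?thesis unfolding Pd_def l_def[symmetric] using q by simp
qed

theorem proposition3p20:
  fixes adj :: "'a \<Rightarrow> 'a \<Rightarrow> bool" and p :: "'a \<Rightarrow> 'a \<Rightarrow> real" and k :: nat
    and \<gamma> :: "'a list" and a b x y :: 'a and xs :: "'a list"
  assumes tree: "is_tree adj" and bv: "bounded_valence adj"
    and kernel: "transition_kernel p" and irr: "irreducible_kernel p"
    and range: "\<And>u v. gdist adj u v > k \<Longrightarrow> p u v = 0"
    and gam: "\<gamma> \<in> Ph p a b"
    and xy: "x \<noteq> y"
    and a_in: "a \<in> Ball_k adj k x" and a_notin: "a \<notin> Ball_k adj k y"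
    and b_in: "b \<in> Ball_k adj k y"
    and geod: "is_geodesic adj xs x y"
  shows "\<exists>!(c, gs, gf). \<exists>ii.
           Xi_geod_with adj k p xs c ii \<and>
           length gs = length c - 1 \<and>
           (\<forall>s. 1 \<le> s \<and> s \<le> length c - 1 \<longrightarrow>
              gs ! (s - 1) \<in> Ph_in p (c ! (s - 1)) (c ! s) (- Ball_k adj k (xs ! ii s))) \<and>
           gf \<in> Ph p (c ! (length c - 1)) b \<and>
           \<gamma> = cat_paths (gs @ [gf])"
proof -
  interpret geo adj xs x y using tree geod by unfold_locales
  have rng: "\<And>u v. p u v > 0 \<Longrightarrow> gdist adj u v \<le> k"
    using range by (metis less_irrefl not_le)
  have bm: "gdist adj b (xs ! m) \<le> k" using b_in xsm by (simp add: inB)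
  have a0: "gdist adj a (xs ! 0) \<le> k" using a_in xs0 by (simp add: inB)
  have ga: "admissible p \<gamma>" "hd \<gamma> = a" "last \<gamma> = b" using gam by (auto simp: Ph_def)
  obtain ii c gs gf where E: "ii 0 = 0" "Qd adj k p xs b ii \<gamma> c gs gf"
    using exist[OF rng bm ga, of 0] a0 by auto
  have "gs \<noteq> []"
  proof
    assume "gs = []"
    then have "c ! 0 \<in> Ball_k adj k (xs ! m)" using Qd_nil E(2) by metis
    moreover have "hd \<gamma> = c ! 0" using Qd_hd[OF E(2)] by simp
    ultimately show False using a_notin ga xsm by simp
  qed
  moreover have "length gs = length c - 1" using E(2) unfolding Qd_def by blast
  ultimately have "0 < length c - 1" by (metis length_greater_0_conv)
  then have P0: "Pd adj k p xs b \<gamma> c gs gf ii" using Q_to_P[OF E(2) E(1)] by simp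
  have un: "c' = c \<and> gs' = gs \<and> gf' = gf" if "Pd adj k p xs b \<gamma> c' gs' gf' ii'" for c' gs' gf' ii'
  proof -
    have A: "Qd adj k p xs b (ii'(0:=0)) \<gamma> c' gs' gf'" using P_to_Q[OF that] by simp
    have B: "Qd adj k p xs b (ii(0:=0)) \<gamma> c gs gf" using P_to_Q[OF P0] by simp
    show ?thesis using uniq[OF A B] by simp
  qed
  have "\<exists>!(c, gs, gf). \<exists>ii. Pd adj k p xs b \<gamma> c gs gf ii"
  proof (rule ex1I[of _ "(c, gs, gf)"])
    show "case (c, gs, gf) of (c, gs, gf) \<Rightarrow> \<exists>ii. Pd adj k p xs b \<gamma> c gs gf ii" using P0 by auto
  next
    fix z assume "case z of (c, gs, gf) \<Rightarrow> \<exists>ii. Pd adj k p xs b \<gamma> c gs gf ii"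
    then obtain c' gs' gf' ii' where "z = (c', gs', gf')" "Pd adj k p xs b \<gamma> c' gs' gf' ii'"
      by (cases z) auto
    then show "z = (c, gs, gf)" using un by simp
  qed
  then show ?thesis unfolding Pd_def by simp
qed



end
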